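(* Let $k\ge 1$ and let $D_k\in\{0,1\}^{k\times k}$ be the matrix with $\mathrm{supp}(D_k)=\{(i,i):i\in[k]\}$. A matrix $M\in\{0,1\}^{m\times n}$ avoids $D_k$ as an interval minor if and only if $M$ contains $k-1$ increasing walks $W_1,\dots,W_{k-1}$ from $(m,1)$ to $(1,n)$ such that $\mathrm{supp}(M)\subseteq W_1\cup\dots\cup W_{k-1}$.
   Context: Rows are numbered top to bottom, columns left to right; $(i,j)$ is the entry in row $i$, column $j$; $\mathrm{supp}(M)$ is the set of 1-entries; $[k]=\{1,\dots,k\}$, $(a,b]=\{a+1,\dots,b\}$. A pattern $P\in\{0,1\}^{k\times\ell}$ is an interval minor of $M\in\{0,1\}^{m\times n}$ if there are integers $0=r_0<\dots<r_k=m$ and $0=c_0<\dots<c_\ell=n$ such that for each 1-entry $(i,j)$ of $P$ the submatrix of $M$ on rows $(r_{i-1},r_i]$ and columns $(c_{j-1},c_j]$ contains a 1-entry; otherwise $M$ avoids $P$. An increasing walk from $e$ to $e'$ in $M$ is a set of entries $\{e_0,\dots,e_t\}$, $e_i=(r_i,c_i)$, with $e_0=e$, $e_t=e'$, and for each $i\in[t]$ either $r_i=r_{i-1}$ and $c_i=c_{i-1}+1$, or $r_i=r_{i-1}-1$ and $c_i=c_{i-1}$. *)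

theory Defs
  imports Main
begin

text \<open>A 0/1 matrix with m rows and n columns is modelled as a predicate
  M :: nat \<Rightarrow> nat \<Rightarrow> bool, where M i j means entry (i,j) is 1;
  only entries with 1 \<le> i \<le> m and 1 \<le> j \<le> n are meaningful.\<close>

definition supp :: "nat \<Rightarrow> nat \<Rightarrow> (nat \<Rightarrow> nat \<Rightarrow> bool) \<Rightarrow> (nat \<times> nat) set" where
  "supp m n M = {(i, j). i \<in> {1..m} \<and> j \<in> {1..n} \<and> M i j}"

definition interval_minor ::
  "nat \<Rightarrow> nat \<Rightarrow> (nat \<Rightarrow> nat \<Rightarrow> bool) \<Rightarrow> nat \<Rightarrow> nat \<Rightarrow> (nat \<Rightarrow> nat \<Rightarrow> bool) \<Rightarrow> bool" where
  "interval_minor k l P m n M \<longleftrightarrow>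
     (\<exists>r c :: nat \<Rightarrow> nat.
        r 0 = 0 \<and> r k = m \<and> (\<forall>i<k. r i < r (Suc i)) \<and>
        c 0 = 0 \<and> c l = n \<and> (\<forall>j<l. c j < c (Suc j)) \<and>
        (\<forall>(i, j) \<in> supp k l P.
           \<exists>a b. a \<in> {r (i - 1) <.. r i} \<and> b \<in> {c (j - 1) <.. c j} \<and> M a b))"

definition diag_pattern :: "nat \<Rightarrow> nat \<Rightarrow> bool" where
  "diag_pattern i j \<longleftrightarrow> i = j"

definition increasing_walk ::
  "nat \<Rightarrow> nat \<Rightarrow> nat \<times> nat \<Rightarrow> nat \<times> nat \<Rightarrow> (nat \<times> nat) set \<Rightarrow> bool" where
  "increasing_walk m n e e' W \<longleftrightarrow>
     (\<exists>(t::nat) (f :: nat \<Rightarrow> nat \<times> nat).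
        W = f ` {0..t} \<and> f 0 = e \<and> f t = e' \<and>
        (\<forall>s\<in>{0..t}. fst (f s) \<in> {1..m} \<and> snd (f s) \<in> {1..n}) \<and>
        (\<forall>s\<in>{1..t}.
           (fst (f s) = fst (f (s - 1)) \<and> snd (f s) = snd (f (s - 1)) + 1) \<or>
           (fst (f s) + 1 = fst (f (s - 1)) \<and> snd (f s) = snd (f (s - 1)))))"

end

theory Submission
  imports Defs
begin

definition lt2 :: "nat \<times> nat \<Rightarrow> nat \<times> nat \<Rightarrow> bool" where
  "lt2 x y \<longleftrightarrow> fst x < fst y \<and> snd x < snd y"

definition comp2 :: "nat \<times> nat \<Rightarrow> nat \<times> nat \<Rightarrow> bool" where
  "comp2 x y \<longleftrightarrow> (fst y \<le> fst x \<and> snd x \<le> snd y) \<or> (fst x \<le> fst y \<and> snd y \<le> snd x)"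

lemma walk_prepend:
  assumes "increasing_walk m n p' e' W" "fst p \<in> {1..m}" "snd p \<in> {1..n}"
    "(fst p' = fst p \<and> snd p' = snd p + 1) \<or> (fst p' + 1 = fst p \<and> snd p' = snd p)"
  shows "increasing_walk m n p e' (insert p W)"
proof -
  from assms(1) obtain t :: nat and f :: "nat \<Rightarrow> nat \<times> nat" where W: "W = f ` {0..t}" and f0: "f 0 = p'" and ft: "f t = e'"
    and gr: "\<forall>s\<in>{0..t}. fst (f s) \<in> {1..m} \<and> snd (f s) \<in> {1..n}"
    and st: "\<forall>s\<in>{1..t}. (fst (f s) = fst (f (s - 1)) \<and> snd (f s) = snd (f (s - 1)) + 1) \<or>
           (fst (f s) + 1 = fst (f (s - 1)) \<and> snd (f s) = snd (f (s - 1)))"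
    unfolding increasing_walk_def by (elim exE conjE) blast
  define g where "g s = (if s = 0 then p else f (s - 1))" for s
  have A: "insert p W = g ` {0..Suc t}"
  proof
    show "insert p W \<subseteq> g ` {0..Suc t}"
    proof
      fix x assume "x \<in> insert p W"
      then consider "x = p" | s where "s \<in> {0..t}" "x = f s" using W by auto
      then show "x \<in> g ` {0..Suc t}"
      proof cases
        case 1 then show ?thesis by (intro image_eqI[where x=0]) (auto simp: g_def)
      next
        case 2 then show ?thesis by (intro image_eqI[where x="Suc s"]) (auto simp: g_def)
      qed
    qed
  next
    show "g ` {0..Suc t} \<subseteq> insert p W" using W by (auto simp: g_def)
  qed
  have B: "\<forall>s\<in>{0..Suc t}. fst (g s) \<in> {1..m} \<and> snd (g s) \<in> {1..n}"
  proof
    fix s assume "s \<in> {0..Suc t}"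
    then show "fst (g s) \<in> {1..m} \<and> snd (g s) \<in> {1..n}"
      using gr assms(2,3) by (cases s) (auto simp: g_def)
  qed
  have C: "\<forall>s\<in>{1..Suc t}. (fst (g s) = fst (g (s - 1)) \<and> snd (g s) = snd (g (s - 1)) + 1) \<or>
           (fst (g s) + 1 = fst (g (s - 1)) \<and> snd (g s) = snd (g (s - 1)))"
  proof
    fix s assume s: "s \<in> {1..Suc t}"
    show "(fst (g s) = fst (g (s - 1)) \<and> snd (g s) = snd (g (s - 1)) + 1) \<or>
           (fst (g s) + 1 = fst (g (s - 1)) \<and> snd (g s) = snd (g (s - 1)))"
    proof (cases "s = 1")
      case True then show ?thesis using assms(4) f0 by (auto simp: g_def)
    next
      case False
      then have "s - 1 \<in> {1..t}" using s by auto
      then have "(fst (f (s-1)) = fst (f (s - 1 - 1)) \<and> snd (f (s-1)) = snd (f (s - 1 - 1)) + 1) \<or>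
           (fst (f (s-1)) + 1 = fst (f (s - 1 - 1)) \<and> snd (f (s-1)) = snd (f (s - 1 - 1)))"
        using st by blast
      moreover have "g s = f (s - 1)" "g (s - 1) = f (s - 1 - 1)" using False s by (auto simp: g_def)
      ultimately show ?thesis by simp
    qed
  qed
  show ?thesis unfolding increasing_walk_def
    apply (rule exI[of _ "Suc t"], rule exI[of _ g])
    using A B C ft by (auto simp: g_def)
qed

lemma walk_exists:
  assumes "d = (a - 1) + (n - b)" "1 \<le> a" "a \<le> m" "1 \<le> b" "b \<le> n"
    "\<forall>q\<in>C. fst q \<in> {1..m} \<and> snd q \<in> {1..n} \<and> fst q \<le> a \<and> b \<le> snd q"
    "\<forall>x\<in>C. \<forall>y\<in>C. comp2 x y"
  shows "\<exists>W. increasing_walk m n (a, b) (1, n) W \<and> C \<subseteq> W"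
  using assms
proof (induction d arbitrary: a b C)
  case 0
  then have ab: "a = 1" "b = n" by auto
  have "C \<subseteq> {(1,n)}"
  proof
    fix q assume "q \<in> C" then show "q \<in> {(1,n)}" using 0 ab by (cases q) force
  qed
  moreover have "increasing_walk m n (a,b) (1,n) {(1,n)}"
    unfolding increasing_walk_def using ab 0 by (intro exI[of _ 0] exI[of _ "\<lambda>_. (1,n)"]) auto
  ultimately show ?case using ab by blast
next
  case (Suc d)
  let ?C = "C - {(a,b)}"
  show ?case
  proof (cases "1 < a \<and> (\<forall>q\<in>?C. fst q \<le> a - 1)")
    case True
    have "\<exists>W. increasing_walk m n (a - 1, b) (1, n) W \<and> ?C \<subseteq> W"
      apply (rule Suc.IH) using Suc.prems True by auto
    then obtain W where W: "increasing_walk m n (a - 1, b) (1, n) W" "?C \<subseteq> W" by blast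
    have "increasing_walk m n (a, b) (1, n) (insert (a,b) W)"
      by (rule walk_prepend[OF W(1)]) (use Suc.prems True in auto)
    with W(2) show ?thesis by blast
  next
    case False
    have key: "b < n \<and> (\<forall>q\<in>?C. fst q \<le> a \<and> b + 1 \<le> snd q)"
    proof (cases "a = 1")
      case True
      then have "b < n" using Suc.prems by auto
      moreover have "\<forall>q\<in>?C. fst q \<le> a \<and> b + 1 \<le> snd q"
      proof
        fix q assume q: "q \<in> ?C"
        then have "fst q = 1" "b \<le> snd q" "q \<noteq> (a,b)" using Suc.prems True by auto
        then show "fst q \<le> a \<and> b + 1 \<le> snd q" using True by (cases q) auto
      qed
      ultimately show ?thesis by blast
    next
      case a1: False
      then obtain q0 where q0: "q0 \<in> ?C" "\<not> fst q0 \<le> a - 1" using False Suc.prems by auto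
      have q0a: "fst q0 = a" using q0 Suc.prems by auto
      have q0b: "b + 1 \<le> snd q0" using q0 q0a Suc.prems by (cases q0) auto
      have "\<forall>q\<in>?C. fst q \<le> a \<and> b + 1 \<le> snd q"
      proof
        fix q assume q: "q \<in> ?C"
        have "comp2 q q0" using q q0 Suc.prems(7) by blast
        then show "fst q \<le> a \<and> b + 1 \<le> snd q" using q q0a q0b Suc.prems
          unfolding comp2_def by (cases q) auto
      qed
      moreover have "b < n" using q0b q0 Suc.prems by auto
      ultimately show ?thesis by blast
    qed
    have "\<exists>W. increasing_walk m n (a, b + 1) (1, n) W \<and> ?C \<subseteq> W"
      apply (rule Suc.IH) using Suc.prems key by auto
    then obtain W where W: "increasing_walk m n (a, b + 1) (1, n) W" "?C \<subseteq> W" by blast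
    have "increasing_walk m n (a, b) (1, n) (insert (a,b) W)"
      by (rule walk_prepend[OF W(1)]) (use Suc.prems in auto)
    with W(2) show ?thesis by blast
  qed
qed

lemma walk_mono:
  assumes "increasing_walk m n e e' W" "x \<in> W" "y \<in> W"
  shows "comp2 x y"
proof -
  from assms(1) obtain t :: nat and f :: "nat \<Rightarrow> nat \<times> nat" where W: "W = f ` {0..t}"
    and st: "\<forall>s\<in>{1..t}. (fst (f s) = fst (f (s - 1)) \<and> snd (f s) = snd (f (s - 1)) + 1) \<or>
           (fst (f s) + 1 = fst (f (s - 1)) \<and> snd (f s) = snd (f (s - 1)))"
    unfolding increasing_walk_def by (elim exE conjE) blast
  have mono: "fst (f s') \<le> fst (f s) \<and> snd (f s) \<le> snd (f s')" if "s \<le> s'" "s' \<le> t" for s s'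
    using that
  proof (induction s')
    case 0 then show ?case by simp
  next
    case (Suc s')
    show ?case
    proof (cases "s = Suc s'")
      case True then show ?thesis by simp
    next
      case False
      then have "s \<le> s'" using Suc.prems by simp
      then have IH: "fst (f s') \<le> fst (f s) \<and> snd (f s) \<le> snd (f s')" using Suc by simp
      have "Suc s' \<in> {1..t}" using Suc.prems by simp
      then have "(fst (f (Suc s')) = fst (f s') \<and> snd (f (Suc s')) = snd (f s') + 1) \<or>
           (fst (f (Suc s')) + 1 = fst (f s') \<and> snd (f (Suc s')) = snd (f s'))"
        using st by fastforce
      then show ?thesis using IH by auto
    qed
  qed
  obtain s s' where "x = f s" "y = f s'" "s \<le> t" "s' \<le> t" using W assms(2,3) by auto
  then show ?thesis using mono[of s s'] mono[of s' s] unfolding comp2_def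
    by (cases "s \<le> s'") auto
qed

lemma strict_chain_less:
  assumes "\<forall>i<k. (r::nat\<Rightarrow>nat) i < r (Suc i)" "i < j" "j \<le> k"
  shows "r i < r j"
  using assms(2,3)
proof (induction j)
  case 0 thus ?case by simp
next
  case (Suc j) then show ?case using assms(1) by (cases "i = j") (auto intro: less_trans)
qed

lemma strict_chain_le:
  assumes "\<forall>i<k. (r::nat\<Rightarrow>nat) i < r (Suc i)" "i \<le> j" "j \<le> k"
  shows "r i \<le> r j"
  using strict_chain_less[OF assms(1), of i j] assms(2,3) by (cases "i = j") auto

lemma minor_of_list:
  assumes "sorted_wrt lt2 xs" "length xs = k" "k \<ge> 1" "set xs \<subseteq> supp m n M"
  shows "interval_minor k k diag_pattern m n M"
proof -
  have inS: "1 \<le> fst (xs!i) \<and> fst (xs!i) \<le> m \<and> 1 \<le> snd (xs!i) \<and> snd (xs!i) \<le> n \<and>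
      M (fst (xs!i)) (snd (xs!i))" if "i < k" for i
  proof -
    have "xs!i \<in> supp m n M" using assms(2,4) that nth_mem by blast
    then show ?thesis unfolding supp_def by (cases "xs!i") auto
  qed
  have lt: "lt2 (xs!i) (xs!j)" if "i < j" "j < k" for i j
    using sorted_wrt_nth_less[OF assms(1) that(1)] that assms(2) by simp
  define r where "r i = (if i = 0 then 0 else if i < k then fst (xs!(i-1)) else m)" for i
  define c where "c i = (if i = 0 then 0 else if i < k then snd (xs!(i-1)) else n)" for i
  have r0: "r 0 = 0" "r k = m" "c 0 = 0" "c k = n" using assms(3) by (auto simp: r_def c_def)
  have rs: "\<forall>i<k. r i < r (Suc i) \<and> c i < c (Suc i)"
  proof (intro allI impI)
    fix i assume i: "i < k"
    show "r i < r (Suc i) \<and> c i < c (Suc i)"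
    proof (cases "i = 0")
      case True
      then show ?thesis using inS[of 0] i by (auto simp: r_def c_def)
    next
      case False
      have l: "lt2 (xs!(i-1)) (xs!i)" using lt[of "i-1" i] False i by simp
      show ?thesis
      proof (cases "Suc i < k")
        case True
        then show ?thesis using l False by (auto simp: r_def c_def lt2_def)
      next
        case F2: False
        then show ?thesis using l False inS[of i] i by (auto simp: r_def c_def lt2_def)
      qed
    qed
  qed
  have blk: "\<forall>(i, j) \<in> supp k k diag_pattern.
           \<exists>a b. a \<in> {r (i - 1) <.. r i} \<and> b \<in> {c (j - 1) <.. c j} \<and> M a b"
  proof
    fix p assume "p \<in> supp k k diag_pattern"
    then obtain i where p: "p = (i,i)" "1 \<le> i" "i \<le> k"
      unfolding supp_def diag_pattern_def by auto
    have A: "r (i-1) < fst (xs!(i-1)) \<and> c (i-1) < snd (xs!(i-1))"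
    proof (cases "i = 1")
      case True then show ?thesis using inS[of 0] p by (auto simp: r_def c_def)
    next
      case False
      then show ?thesis using lt[of "i-1-1" "i-1"] p by (auto simp: r_def c_def lt2_def)
    qed
    have B: "fst (xs!(i-1)) \<le> r i \<and> snd (xs!(i-1)) \<le> c i"
      using inS[of "i-1"] p by (auto simp: r_def c_def)
    show "case p of (i, j) \<Rightarrow> \<exists>a b. a \<in> {r (i - 1) <.. r i} \<and> b \<in> {c (j - 1) <.. c j} \<and> M a b"
    proof -
      have "i - 1 < k" using p by simp
      then have "M (fst (xs!(i-1))) (snd (xs!(i-1)))" using inS by blast
      then show ?thesis using A B p by auto
    qed
  qed
  show ?thesis unfolding interval_minor_def
    using r0 rs blk by blast
qed

definition Hs :: "(nat \<times> nat) set \<Rightarrow> nat \<times> nat \<Rightarrow> nat set" where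
  "Hs S e = {length ys + 1 | ys. sorted_wrt lt2 (ys @ [e]) \<and> set ys \<subseteq> S}"

definition hh :: "(nat \<times> nat) set \<Rightarrow> nat \<times> nat \<Rightarrow> nat" where
  "hh S e = Max (Hs S e)"

lemma sorted_lt2_distinct: "sorted_wrt lt2 xs \<Longrightarrow> distinct xs"
  by (induction xs) (auto simp: lt2_def)

lemma Hs_finite: assumes "finite S" shows "finite (Hs S e)"
proof -
  have "Hs S e \<subseteq> {..card (insert e S)}"
  proof
    fix x assume "x \<in> Hs S e"
    then obtain ys where ys: "x = length ys + 1" "sorted_wrt lt2 (ys @ [e])" "set ys \<subseteq> S"
      unfolding Hs_def by blast
    have "distinct (ys @ [e])" using sorted_lt2_distinct ys(2) by blast
    then have "length (ys @ [e]) = card (set (ys @ [e]))" by (simp add: distinct_card)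
    also have "\<dots> \<le> card (insert e S)" using ys(3) assms by (intro card_mono) auto
    finally show "x \<in> {..card (insert e S)}" using ys(1) by simp
  qed
  then show ?thesis using finite_subset by blast
qed

lemma Hs_one: "1 \<in> Hs S e"
  unfolding Hs_def by (rule CollectI, rule exI[of _ "[]"]) simp

lemma hh_in: "finite S \<Longrightarrow> hh S e \<in> Hs S e"
  unfolding hh_def using Hs_finite Hs_one by (metis Max_in empty_iff)

lemma hh_ge: "finite S \<Longrightarrow> x \<in> Hs S e \<Longrightarrow> x \<le> hh S e"
  unfolding hh_def using Hs_finite by (metis Max_ge)

lemma hh_pos: "finite S \<Longrightarrow> 1 \<le> hh S e"
  using hh_ge Hs_one by blast

lemma hh_less:
  assumes "finite S" "x \<in> S" "lt2 x y"
  shows "hh S x < hh S y"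
proof -
  obtain ys where ys: "hh S x = length ys + 1" "sorted_wrt lt2 (ys @ [x])" "set ys \<subseteq> S"
    using hh_in[OF assms(1), of x] unfolding Hs_def by blast
  have "\<forall>a\<in>set ys. lt2 a x" using ys(2) by (simp add: sorted_wrt_append)
  then have "\<forall>a\<in>set (ys @ [x]). lt2 a y" using assms(3) by (auto simp: lt2_def)
  then have "sorted_wrt lt2 ((ys @ [x]) @ [y])" using ys(2) by (simp add: sorted_wrt_append)
  moreover have "set (ys @ [x]) \<subseteq> S" using ys(3) assms(2) by simp
  ultimately have "length (ys @ [x]) + 1 \<in> Hs S y" unfolding Hs_def by blast
  then have "length (ys @ [x]) + 1 \<le> hh S y" using hh_ge[OF assms(1)] by blast
  then show ?thesis using ys(1) by simp
qed

lemma hh_list: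
  assumes "finite S" "e \<in> S" "k \<le> hh S e"
  shows "\<exists>xs. sorted_wrt lt2 xs \<and> length xs = k \<and> set xs \<subseteq> S"
proof -
  obtain ys where ys: "hh S e = length ys + 1" "sorted_wrt lt2 (ys @ [e])" "set ys \<subseteq> S"
    using hh_in[OF assms(1), of e] unfolding Hs_def by blast
  let ?xs = "take k (ys @ [e])"
  have "sorted_wrt lt2 ?xs" using sorted_wrt_take[OF ys(2)] .
  moreover have "length ?xs = k" using ys(1) assms(3) by simp
  moreover have "set ?xs \<subseteq> S" using ys(3) assms(2) set_take_subset[of k "ys @ [e]"] by auto
  ultimately show ?thesis by blast
qed

lemma supp_finite: "finite (supp m n M)"
proof -
  have "supp m n M \<subseteq> {1..m} \<times> {1..n}" unfolding supp_def by auto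
  then show ?thesis by (rule finite_subset) auto
qed

theorem proposition2p3:
  fixes k m n :: nat and M :: "nat \<Rightarrow> nat \<Rightarrow> bool"
  assumes "k \<ge> 1" and "m \<ge> 1" and "n \<ge> 1"
  shows "(\<not> interval_minor k k diag_pattern m n M) \<longleftrightarrow>
         (\<exists>W :: nat \<Rightarrow> (nat \<times> nat) set.
            (\<forall>i\<in>{1..k-1}. increasing_walk m n (m, 1) (1, n) (W i)) \<and>
            supp m n M \<subseteq> (\<Union>i\<in>{1..k-1}. W i))"
proof
  let ?S = "supp m n M"
  have fin: "finite ?S" by (rule supp_finite)
  assume nm: "\<not> interval_minor k k diag_pattern m n M"
  have hb: "hh ?S e \<le> k - 1" if eS: "e \<in> ?S" for e
  proof (rule ccontr)
    assume "\<not> hh ?S e \<le> k - 1"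
    then have "k \<le> hh ?S e" by simp
    then obtain xs where "sorted_wrt lt2 xs" "length xs = k" "set xs \<subseteq> ?S"
      using hh_list[OF fin eS] by blast
    then show False using minor_of_list assms(1) nm by blast
  qed
  have ex: "\<exists>W. increasing_walk m n (m, 1) (1, n) W \<and> {e \<in> ?S. hh ?S e = i} \<subseteq> W" for i
  proof (rule walk_exists[OF refl])
    show "\<forall>q\<in>{e \<in> ?S. hh ?S e = i}. fst q \<in> {1..m} \<and> snd q \<in> {1..n} \<and> fst q \<le> m \<and> 1 \<le> snd q"
      unfolding supp_def by auto
    show "\<forall>x\<in>{e \<in> ?S. hh ?S e = i}. \<forall>y\<in>{e \<in> ?S. hh ?S e = i}. comp2 x y"
    proof (intro ballI)
      fix x y assume x: "x \<in> {e \<in> ?S. hh ?S e = i}" and y: "y \<in> {e \<in> ?S. hh ?S e = i}"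
      show "comp2 x y"
      proof (rule ccontr)
        assume "\<not> comp2 x y"
        then have "lt2 x y \<or> lt2 y x" unfolding comp2_def lt2_def by auto
        then show False using hh_less[OF fin, of x y] hh_less[OF fin, of y x] x y by auto
      qed
    qed
  qed (use assms in auto)
  then obtain W where W: "\<forall>i. increasing_walk m n (m, 1) (1, n) (W i) \<and> {e \<in> ?S. hh ?S e = i} \<subseteq> W i"
    by metis
  have "?S \<subseteq> (\<Union>i\<in>{1..k-1}. W i)"
  proof
    fix e assume e: "e \<in> ?S"
    then have "hh ?S e \<in> {1..k-1}" using hb hh_pos[OF fin] by auto
    moreover have "e \<in> W (hh ?S e)" using W e by blast
    ultimately show "e \<in> (\<Union>i\<in>{1..k-1}. W i)" by blast
  qed
  then show "\<exists>W :: nat \<Rightarrow> (nat \<times> nat) set.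
            (\<forall>i\<in>{1..k-1}. increasing_walk m n (m, 1) (1, n) (W i)) \<and>
            supp m n M \<subseteq> (\<Union>i\<in>{1..k-1}. W i)" using W by blast
next
  assume "\<exists>W :: nat \<Rightarrow> (nat \<times> nat) set.
            (\<forall>i\<in>{1..k-1}. increasing_walk m n (m, 1) (1, n) (W i)) \<and>
            supp m n M \<subseteq> (\<Union>i\<in>{1..k-1}. W i)"
  then obtain W :: "nat \<Rightarrow> (nat \<times> nat) set" where
    Wi: "\<forall>i\<in>{1..k-1}. increasing_walk m n (m, 1) (1, n) (W i)" and
    cov: "supp m n M \<subseteq> (\<Union>i\<in>{1..k-1}. W i)" by blast
  show "\<not> interval_minor k k diag_pattern m n M"
  proof
    assume "interval_minor k k diag_pattern m n M"
    then obtain r c :: "nat \<Rightarrow> nat" where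
      r: "r 0 = 0" "r k = m" "\<forall>i<k. r i < r (Suc i)" and
      c: "c 0 = 0" "c k = n" "\<forall>j<k. c j < c (Suc j)" and
      blk: "\<forall>(i, j) \<in> supp k k diag_pattern.
           \<exists>a b. a \<in> {r (i - 1) <.. r i} \<and> b \<in> {c (j - 1) <.. c j} \<and> M a b"
      unfolding interval_minor_def by blast
    have "\<forall>i\<in>{1..k}. \<exists>p. fst p \<in> {r (i - 1) <.. r i} \<and> snd p \<in> {c (i - 1) <.. c i} \<and> M (fst p) (snd p)"
    proof
      fix i assume i: "i \<in> {1..k}"
      then have "(i,i) \<in> supp k k diag_pattern" unfolding supp_def diag_pattern_def by auto
      then obtain a b where "a \<in> {r (i - 1) <.. r i} \<and> b \<in> {c (i - 1) <.. c i} \<and> M a b"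
        using blk by fastforce
      then show "\<exists>p. fst p \<in> {r (i - 1) <.. r i} \<and> snd p \<in> {c (i - 1) <.. c i} \<and> M (fst p) (snd p)"
        by (intro exI[of _ "(a,b)"]) auto
    qed
    then obtain P where P: "\<forall>i\<in>{1..k}. fst (P i) \<in> {r (i - 1) <.. r i} \<and> snd (P i) \<in> {c (i - 1) <.. c i} \<and> M (fst (P i)) (snd (P i))"
      by (metis (no_types) bchoice)
    have PS: "P i \<in> supp m n M" if i: "i \<in> {1..k}" for i
    proof -
      have "r i \<le> r k" "c i \<le> c k" using strict_chain_le[OF r(3), of i k] strict_chain_le[OF c(3), of i k] i by auto
      then show ?thesis using P i r c unfolding supp_def by (cases "P i") force
    qed
    have Plt: "lt2 (P i) (P j)" if "i \<in> {1..k}" "j \<in> {1..k}" "i < j" for i j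
    proof -
      have "r i \<le> r (j-1)" "c i \<le> c (j-1)" using strict_chain_le[OF r(3), of i "j-1"] strict_chain_le[OF c(3), of i "j-1"] that by auto
      moreover have "fst (P i) \<le> r i" "snd (P i) \<le> c i" using P that(1) by auto
      moreover have "r (j-1) < fst (P j)" "c (j-1) < snd (P j)" using P that(2) by auto
      ultimately show ?thesis unfolding lt2_def by simp
    qed
    have "\<forall>i\<in>{1..k}. \<exists>g. g \<in> {1..k-1} \<and> P i \<in> W g" using PS cov by blast
    then obtain g where g: "\<forall>i\<in>{1..k}. g i \<in> {1..k-1} \<and> P i \<in> W (g i)"
      by (metis (no_types) bchoice)
    have "\<not> inj_on g {1..k}"
    proof
      assume "inj_on g {1..k}"
      then have "card {1..k} \<le> card {1..k-1}" using g by (intro card_inj_on_le) auto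
      then show False using assms(1) by simp
    qed
    then obtain i j where ij: "i \<in> {1..k}" "j \<in> {1..k}" "i \<noteq> j" "g i = g j"
      unfolding inj_on_def by blast
    have sym: False if "i \<in> {1..k}" "j \<in> {1..k}" "i < j" "g i = g j" for i j
    proof -
      have gi1: "g i \<in> {1..k-1}" "P i \<in> W (g i)" using g that(1) by auto
      have "P j \<in> W (g j)" using g that(2) by auto
      then have gi: "g i \<in> {1..k-1}" "P i \<in> W (g i)" "P j \<in> W (g i)" using gi1 that(4) by auto
      have "comp2 (P i) (P j)" using walk_mono[of m n "(m,1)" "(1,n)" "W (g i)" "P i" "P j"]
        Wi gi by blast
      then show False using Plt[OF that(1-3)] unfolding comp2_def lt2_def by auto
    qed
    show False using sym[of i j] sym[of j i] ij by (cases "i < j") auto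
  qed
qed

end
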